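(* Let $r,s\ge 1$ and let $A=(A_{ij})_{i,j=1}^r$ be an $rs\times rs$ matrix with non-negative entries, written in $s\times s$ blocks $A_{ij}$, which is a disoriented $(r,s)$-block circulant matrix. Suppose that \[ \left( \sum_{j=1}^r A_{1j} \right) \mathbf{J}_s = \mathbf{J}_s \left( \sum_{j=1}^r A_{1j} \right). \] Then $\rho(A) = \rho\left(\sum_{j=1}^r A_{1j} \right)$.
   Context: $\rho(M)$ denotes the spectral radius of a square matrix $M$. $\mathbf{J}_s$ denotes the $s\times s$ $(0,1)$-matrix with ones exactly on the anti-diagonal. An $(r,s)$-block circulant matrix is an $rs\times rs$ matrix in $s\times s$ blocks of the form whose first block row is $(B_1\ B_2\ \dots\ B_r)$ and whose $i$-th block row is the first block row cyclically shifted $i-1$ places to the right (so block $(i,j)$ is $B_{[j-i+1]_r}$, indices mod $r$ in $\{1,\dots,r\}$). An $(r,s)$-disoriented block circulant matrix is a block matrix $A=(A_{ij})_{i,j=1}^r$ with $s\times s$ blocks for which there is an $(r,s)$-block circulant matrix $\widetilde A=(\widetilde A_{ij})$ with the same first block row ($\widetilde A_{1j}=A_{1j}$ for all $j$) such that for each $i\in\{2,\dots,r\}$ either $A_{ij}=\widetilde A_{ij}$ for all $j=1,\dots,r$, or $A_{ij}=\mathbf{J}_s\widetilde A_{ij}$ for all $j=1,\dots,r$. *)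

theory Defs
  imports "Jordan_Normal_Form.Spectral_Radius"
begin

text \<open>Conventions: block indices and matrix indices are 0-based.
  A real (r*s)x(r*s) matrix M is viewed as an r x r array of s x s blocks.\<close>

definition blk :: "nat \<Rightarrow> real mat \<Rightarrow> nat \<Rightarrow> nat \<Rightarrow> real mat" where
  "blk s M i j = mat s s (\<lambda>(a,b). M $$ (i*s + a, j*s + b))"

definition antidiag :: "nat \<Rightarrow> real mat" where
  "antidiag s = mat s s (\<lambda>(a,b). if a + b = s - 1 then 1 else 0)"

definition block_circulant :: "nat \<Rightarrow> nat \<Rightarrow> real mat \<Rightarrow> bool" where
  "block_circulant r s M \<longleftrightarrow> M \<in> carrier_mat (r*s) (r*s) \<and>
     (\<forall>i<r. \<forall>j<r. blk s M i j = blk s M 0 ((j + r - i) mod r))"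

definition disoriented_block_circulant :: "nat \<Rightarrow> nat \<Rightarrow> real mat \<Rightarrow> bool" where
  "disoriented_block_circulant r s A \<longleftrightarrow> A \<in> carrier_mat (r*s) (r*s) \<and>
     (\<exists>At. block_circulant r s At \<and> (\<forall>j<r. blk s A 0 j = blk s At 0 j) \<and>
        (\<forall>i. 1 \<le> i \<and> i < r \<longrightarrow>
            (\<forall>j<r. blk s A i j = blk s At i j) \<or>
            (\<forall>j<r. blk s A i j = antidiag s * blk s At i j)))"

definition first_row_block_sum :: "nat \<Rightarrow> nat \<Rightarrow> real mat \<Rightarrow> real mat" where
  "first_row_block_sum r s A = mat s s (\<lambda>(a,b). \<Sum>j<r. A $$ (a, j*s + b))"

definition rho :: "real mat \<Rightarrow> real" where
  "rho M = spectral_radius (map_mat complex_of_real M)"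

end

theory Submission
  imports Defs
begin


lemma smult_pow_mat: "N \<in> carrier_mat m m \<Longrightarrow> (c \<cdot>\<^sub>m N) ^\<^sub>m k = (c ^ k) \<cdot>\<^sub>m (N ^\<^sub>m k :: complex mat)"
proof (induct k)
  case 0 then show ?case by (auto intro!: eq_matI)
next
  case (Suc k)
  then show ?case
    by (simp add: mult_smult_assoc_mat[of _ m m _ m] mult_smult_distrib[of _ m m _ m])
       (auto intro!: eq_matI)
qed

lemma sr_nonneg: "N \<in> carrier_mat m m \<Longrightarrow> m > 0 \<Longrightarrow> spectral_radius N \<ge> 0"
  using spectral_radius_mem_max(1)[of N m] by auto

lemma sr_le:
  fixes M N :: "complex mat"
  assumes M: "M \<in> carrier_mat n n" and N: "N \<in> carrier_mat m m" and n: "n > 0" and m: "m > 0"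
    and C: "C \<ge> 0"
    and hyp: "\<And>k d. norm_bound (N ^\<^sub>m k) d \<Longrightarrow> norm_bound (M ^\<^sub>m k) (C * d)"
  shows "spectral_radius M \<le> spectral_radius N"
proof (rule ccontr)
  assume "\<not> ?thesis"
  hence lt: "spectral_radius N < spectral_radius M" by simp
  define t where "t = (spectral_radius N + spectral_radius M) / 2"
  have t0: "t > 0" using sr_nonneg[OF N m] lt unfolding t_def by simp
  have tN: "spectral_radius N < t" and tM: "t < spectral_radius M" using lt unfolding t_def by simp_all
  define N' where "N' = complex_of_real (1/t) \<cdot>\<^sub>m N"
  have N': "N' \<in> carrier_mat m m" unfolding N'_def using N by simp
  have NN': "N = complex_of_real t \<cdot>\<^sub>m N'"
    unfolding N'_def using t0 by (auto intro!: eq_matI)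
  have "spectral_radius N' < 1"
  proof -
    obtain ev where ev: "ev \<in> spectrum N'" and nev: "spectral_radius N' = norm ev"
      using spectral_radius_mem_max(1)[OF N' m] by auto
    from ev obtain v where v: "eigenvector N' v ev" unfolding spectrum_def eigenvalue_def by auto
    have "eigenvector N v (complex_of_real t * ev)"
    proof -
      have vc': "v \<in> carrier_vec m" using v N' unfolding eigenvector_def by auto
      have "N *\<^sub>v v = complex_of_real t \<cdot>\<^sub>v (N' *\<^sub>v v)"
        unfolding NN' using N' vc' by (auto intro!: eq_vecI simp: scalar_prod_def sum_distrib_left ac_simps)
      also have "\<dots> = (complex_of_real t * ev) \<cdot>\<^sub>v v" using v unfolding eigenvector_def by (auto simp: smult_smult_assoc)
      finally show ?thesis using v N N' unfolding eigenvector_def by auto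
    qed
    hence "norm (complex_of_real t * ev) \<in> norm ` spectrum N" unfolding spectrum_def eigenvalue_def by auto
    from spectral_radius_mem_max(2)[OF N m this] have "t * norm ev \<le> spectral_radius N"
      using t0 by (simp add: norm_mult)
    note le = this
    have "norm ev < 1"
    proof (rule ccontr)
      assume "\<not> norm ev < 1"
      hence "t * 1 \<le> t * norm ev" using t0 by (intro mult_left_mono) auto
      thus False using le tN by linarith
    qed
    thus ?thesis using nev by simp
  qed
  from spectral_radius_jnf_norm_bound_less_1_upper_triangular[OF N' this]
  obtain c where c: "\<And>k. norm_bound (N' ^\<^sub>m k) c" by auto
  have bM: "norm_bound (M ^\<^sub>m k) (C * (c * t ^ k))" for k
  proof -
    have "norm_bound (N ^\<^sub>m k) (c * t ^ k)"
    proof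
      fix i j assume "i < dim_row (N ^\<^sub>m k)" "j < dim_col (N ^\<^sub>m k)"
      hence ij: "i < m" "j < m" using N by (auto split: if_splits)
      have "(N ^\<^sub>m k) $$ (i,j) = complex_of_real t ^ k * (N' ^\<^sub>m k) $$ (i,j)"
        unfolding NN' smult_pow_mat[OF N'] using ij N' by simp
      moreover have "norm ((N' ^\<^sub>m k) $$ (i,j)) \<le> c" using c[of k] ij N' unfolding norm_bound_def by auto
      ultimately show "norm ((N ^\<^sub>m k) $$ (i,j)) \<le> c * t ^ k"
        using t0 by (simp add: norm_mult norm_power mult.commute mult_left_mono)
    qed
    thus ?thesis by (rule hyp)
  qed
  obtain ev where ev: "ev \<in> spectrum M" and nev: "spectral_radius M = norm ev"
    using spectral_radius_mem_max(1)[OF M n] by auto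
  from ev obtain v where v: "eigenvector M v ev" unfolding spectrum_def eigenvalue_def by auto
  have vc: "v \<in> carrier_vec n" and vnz: "v \<noteq> 0\<^sub>v n" using v M unfolding eigenvector_def by auto
  then obtain i where i: "i < n" and vi: "v $ i \<noteq> 0" by (auto simp: vec_eq_iff)
  define S where "S = (\<Sum>j<n. norm (v $ j))"
  have key: "norm ev ^ k * norm (v $ i) \<le> C * c * S * t ^ k" for k
  proof -
    have "ev ^ k * v $ i = (M ^\<^sub>m k *\<^sub>v v) $ i" using eigenvector_pow[OF M v, of k] i vc by simp
    also have "\<dots> = (\<Sum>j<n. (M ^\<^sub>m k) $$ (i,j) * v $ j)"
      using i vc M by (simp add: scalar_prod_def lessThan_atLeast0)
    finally have "norm (ev ^ k * v $ i) \<le> (\<Sum>j<n. norm ((M ^\<^sub>m k) $$ (i,j)) * norm (v $ j))"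
      by (metis (no_types, lifting) norm_mult norm_sum sum.cong)
    also have "\<dots> \<le> (\<Sum>j<n. (C * (c * t ^ k)) * norm (v $ j))"
      using bM[of k] i M unfolding norm_bound_def by (intro sum_mono mult_right_mono) auto
    finally show ?thesis unfolding S_def by (simp add: norm_mult norm_power sum_distrib_left ac_simps)
  qed
  have q: "norm ev / t > 1" using tM nev t0 by simp
  from real_arch_pow[OF q, of "C * c * S / norm (v $ i)"] obtain k where
    k: "C * c * S / norm (v $ i) < (norm ev / t) ^ k" by auto
  have "(norm ev / t) ^ k * norm (v $ i) \<le> C * c * S"
    using key[of k] t0 by (simp add: power_divide divide_le_eq mult.commute mult.left_commute)
  with k vi show False by (simp add: divide_less_eq)
qed


lemma circ_reindex:
  fixes f :: "nat \<Rightarrow> real"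
  assumes "k < r"
  shows "(\<Sum>j<r. f ((j + r - k) mod r)) = (\<Sum>j<r. f j)"
proof (rule sum.reindex_bij_witness[where i="\<lambda>j. (j + k) mod r" and j="\<lambda>j. (j + r - k) mod r"])
  fix a assume a: "a \<in> {..<r}"
  have "((a + r - k) mod r + k) mod r = (a + r - k + k) mod r" by (simp add: mod_add_left_eq)
  also have "\<dots> = a" using a assms by simp
  finally show "((a + r - k) mod r + k) mod r = a" .
  have "((a + k) mod r + r - k) mod r = ((a + k) mod r + (r - k)) mod r" using assms by simp
  also have "\<dots> = (a + k + (r - k)) mod r" by (simp add: mod_add_left_eq)
  also have "\<dots> = a" using a assms by simp
  finally show "((a + k) mod r + r - k) mod r = a" .
qed (use assms in auto)

lemma rev_reindex:
  fixes f :: "nat \<Rightarrow> real"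
  shows "(\<Sum>b<s. f (s - 1 - b)) = (\<Sum>b<s. f b)"
  by (rule sum.reindex_bij_witness[where i="\<lambda>b. s - 1 - b" and j="\<lambda>b. s - 1 - b"]) auto

lemma sum_split:
  fixes f :: "nat \<Rightarrow> real"
  shows "(\<Sum>l<r*s. f l) = (\<Sum>j<r. \<Sum>b<s. f (j*s+b))"
proof (induct r)
  case 0 then show ?case by simp
next
  case (Suc r)
  have "(\<Sum>l<Suc r*s. f l) = (\<Sum>l<r*s. f l) + (\<Sum>l\<in>{r*s..<r*s+s}. f l)"
    by (simp add: lessThan_atLeast0 sum.atLeastLessThan_concat add.commute)
  also have "(\<Sum>l\<in>{r*s..<r*s+s}. f l) = (\<Sum>b<s. f (r*s+b))"
    using sum.atLeastLessThan_shift_bounds[of f 0 "r*s" s]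
    by (simp add: lessThan_atLeast0 comp_def add.commute)
  finally show ?case using Suc by simp
qed

lemma antidiag_mult: assumes "X \<in> carrier_mat s s" "a < s" "b < s"
  shows "(antidiag s * X) $$ (a,b) = X $$ (s-1-a, b)"
proof -
  have "(antidiag s * X) $$ (a,b) = (\<Sum>c<s. (if a + c = s - 1 then 1 else 0) * X $$ (c,b))"
    using assms by (simp add: antidiag_def scalar_prod_def lessThan_atLeast0)
  also have "\<dots> = (\<Sum>c<s. if c = s-1-a then X $$ (c,b) else 0)"
    using assms by (intro sum.cong) auto
  also have "\<dots> = X $$ (s-1-a, b)" using assms by simp
  finally show ?thesis .
qed

lemma mult_antidiag: assumes "X \<in> carrier_mat s s" "a < s" "b < s"
  shows "(X * antidiag s) $$ (a,b) = X $$ (a, s-1-b)"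
proof -
  have "(X * antidiag s) $$ (a,b) = (\<Sum>c<s. X $$ (a,c) * (if c + b = s - 1 then 1 else 0))"
    using assms by (simp add: antidiag_def scalar_prod_def lessThan_atLeast0)
  also have "\<dots> = (\<Sum>c<s. if c = s-1-b then X $$ (a,c) else 0)"
    using assms by (intro sum.cong) auto
  also have "\<dots> = X $$ (a, s-1-b)" using assms by simp
  finally show ?thesis .
qed

lemma nonneg_pow:
  assumes P: "P \<in> carrier_mat n n" and nn: "\<forall>i<n. \<forall>j<n. P $$ (i,j) \<ge> (0::real)"
  shows "i < n \<Longrightarrow> j < n \<Longrightarrow> (P ^\<^sub>m k) $$ (i,j) \<ge> 0"
proof (induct k arbitrary: i j)
  case 0 then show ?case using P by simp
next
  case (Suc k)
  have "(P ^\<^sub>m Suc k) $$ (i,j) = (\<Sum>c<n. (P ^\<^sub>m k) $$ (i,c) * P $$ (c,j))"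
    using Suc P by (simp add: scalar_prod_def lessThan_atLeast0)
  also have "\<dots> \<ge> 0" using Suc nn by (intro sum_nonneg mult_nonneg_nonneg) auto
  finally show ?case .
qed

lemma entry_le_rowsum:
  assumes P: "P \<in> carrier_mat n n" and nn: "\<forall>i<n. \<forall>j<n. P $$ (i,j) \<ge> (0::real)"
    and i: "i < n" and j: "j < n"
  shows "P $$ (i,j) \<le> (P *\<^sub>v vec n (\<lambda>_. 1)) $ i"
proof -
  have "(P *\<^sub>v vec n (\<lambda>_. 1)) $ i = (\<Sum>c<n. P $$ (i,c))"
    using P i by (simp add: scalar_prod_def lessThan_atLeast0)
  also have "\<dots> \<ge> P $$ (i,j)" using nn i j by (intro member_le_sum) auto
  finally show ?thesis .
qed

lemma rowsum_le:
  assumes P: "P \<in> carrier_mat n n" and nb: "norm_bound P d" and i: "i < n"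
  shows "(P *\<^sub>v vec n (\<lambda>_. 1)) $ i \<le> real n * d"
proof -
  have b: "\<forall>j<n. \<bar>P $$ (i,j)\<bar> \<le> d" using nb P i unfolding norm_bound_def by auto
  have "(P *\<^sub>v vec n (\<lambda>_. 1)) $ i = (\<Sum>c<n. P $$ (i,c))"
    using P i by (simp add: scalar_prod_def lessThan_atLeast0)
  also have "\<dots> \<le> (\<Sum>c<n. d)"
    using b by (intro sum_mono) (auto intro: abs_le_D1)
  finally show ?thesis by simp
qed


lemma blk_idx: "a < s \<Longrightarrow> b < s \<Longrightarrow> blk s X i j $$ (a,b) = X $$ (i*s+a, j*s+b)"
  by (simp add: blk_def)

lemma blk_carrier: "blk s X i j \<in> carrier_mat s s"
  by (simp add: blk_def)

lemma row_struct:
  assumes dis: "disoriented_block_circulant r s A" and i: "i < r"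
  shows "\<exists>f. \<forall>a<s. \<forall>j<r. \<forall>b<s. A $$ (i*s+a, j*s+b) = A $$ (if f then s-1-a else a, ((j+r-i) mod r)*s+b)"
proof -
  obtain At where bc: "block_circulant r s At" and fr: "\<forall>j<r. blk s A 0 j = blk s At 0 j"
    and rows: "\<forall>i. 1 \<le> i \<and> i < r \<longrightarrow>
            (\<forall>j<r. blk s A i j = blk s At i j) \<or>
            (\<forall>j<r. blk s A i j = antidiag s * blk s At i j)"
    using dis unfolding disoriented_block_circulant_def by blast
  have circ: "\<forall>i<r. \<forall>j<r. blk s At i j = blk s At 0 ((j + r - i) mod r)"
    using bc unfolding block_circulant_def by blast
  have r0: "r > 0" using i by simp
  show ?thesis
  proof (cases "i = 0")
    case True
    show ?thesis by (rule exI[of _ False]) (use True in \<open>simp add: blk_idx\<close>)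
  next
    case False
    hence "1 \<le> i" by simp
    with rows i consider (P) "\<forall>j<r. blk s A i j = blk s At i j"
      | (J) "\<forall>j<r. blk s A i j = antidiag s * blk s At i j" by blast
    then show ?thesis
    proof cases
      case P
      show ?thesis
      proof (rule exI[of _ False], intro allI impI)
        fix a j b assume ab: "a < s" "j < r" "b < s"
        define k where "k = (j + r - i) mod r"
        have k: "k < r" using r0 unfolding k_def by simp
        have "A $$ (i*s+a, j*s+b) = blk s A i j $$ (a,b)" using ab by (intro blk_idx[symmetric])
        also have "\<dots> = blk s At 0 k $$ (a,b)" using P circ[rule_format, OF i ab(2)] ab unfolding k_def by simp
        also have "\<dots> = blk s A 0 k $$ (a,b)" using fr k by simp
        also have "\<dots> = A $$ (a, k*s+b)" using blk_idx[OF ab(1,3), of A 0 k] by simp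
        finally show "A $$ (i*s+a, j*s+b) = A $$ (if False then s-1-a else a, ((j+r-i) mod r)*s+b)"
          unfolding k_def by simp
      qed
    next
      case J
      show ?thesis
      proof (rule exI[of _ True], intro allI impI)
        fix a j b assume ab: "a < s" "j < r" "b < s"
        define k where "k = (j + r - i) mod r"
        have k: "k < r" using r0 unfolding k_def by simp
        have a': "s - 1 - a < s" using ab by simp
        have "A $$ (i*s+a, j*s+b) = blk s A i j $$ (a,b)" using ab by (intro blk_idx[symmetric])
        also have "\<dots> = (antidiag s * blk s At i j) $$ (a,b)" using J ab by simp
        also have "\<dots> = blk s At i j $$ (s-1-a,b)" using ab by (simp add: antidiag_mult blk_carrier)
        also have "\<dots> = blk s At 0 k $$ (s-1-a,b)" using circ[rule_format, OF i ab(2)] unfolding k_def by simp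
        also have "\<dots> = blk s A 0 k $$ (s-1-a,b)" using fr k by simp
        also have "\<dots> = A $$ (s-1-a, k*s+b)" using blk_idx[OF a' ab(3), of A 0 k] by simp
        finally show "A $$ (i*s+a, j*s+b) = A $$ (if True then s-1-a else a, ((j+r-i) mod r)*s+b)"
          unfolding k_def by simp
      qed
    qed
  qed
qed


lemma B_idx: "a < s \<Longrightarrow> b < s \<Longrightarrow> first_row_block_sum r s A $$ (a,b) = (\<Sum>j<r. A $$ (a, j*s+b))"
  by (simp add: first_row_block_sum_def)

lemma B_carrier: "first_row_block_sum r s A \<in> carrier_mat s s"
  by (simp add: first_row_block_sum_def)

lemma B_dims: "dim_row (first_row_block_sum r s A) = s" "dim_col (first_row_block_sum r s A) = s"
  by (simp_all add: first_row_block_sum_def)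

lemma B_sym:
  fixes B :: "real mat"
  assumes Bc: "B \<in> carrier_mat s s" and comm: "B * antidiag s = antidiag s * B"
    and w: "w \<in> carrier_vec s" and ws: "\<forall>a<s. w $ (s-1-a) = w $ a" and a: "a < s"
  shows "(B *\<^sub>v w) $ (s-1-a) = (B *\<^sub>v w) $ a"
proof -
  have Be: "B $$ (s-1-a, b) = B $$ (a, s-1-b)" if b: "b < s" for b
  proof -
    have "B $$ (s-1-a, b) = (antidiag s * B) $$ (a,b)" using antidiag_mult[OF Bc a b] by simp
    also have "\<dots> = (B * antidiag s) $$ (a,b)" using comm by simp
    also have "\<dots> = B $$ (a, s-1-b)" using mult_antidiag[OF Bc a b] by simp
    finally show ?thesis .
  qed
  have "(B *\<^sub>v w) $ (s-1-a) = (\<Sum>b<s. B $$ (s-1-a, b) * w $ b)"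
    using Bc w a by (simp add: scalar_prod_def lessThan_atLeast0)
  also have "\<dots> = (\<Sum>b<s. B $$ (a, s-1-b) * w $ (s-1-b))"
    using Be ws by (intro sum.cong) auto
  also have "\<dots> = (\<Sum>b<s. B $$ (a, b) * w $ b)"
    by (rule rev_reindex[of "\<lambda>b. B $$ (a, b) * w $ b"])
  also have "\<dots> = (B *\<^sub>v w) $ a"
    using Bc w a by (simp add: scalar_prod_def lessThan_atLeast0)
  finally show ?thesis .
qed

lemma stack_mult:
  assumes Ac: "A \<in> carrier_mat (r*s) (r*s)"
    and rs: "\<And>i. i < r \<Longrightarrow> \<exists>f. \<forall>a<s. \<forall>j<r. \<forall>b<s. A $$ (i*s+a, j*s+b) = A $$ (if f then s-1-a else a, ((j+r-i) mod r)*s+b)"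
    and comm: "first_row_block_sum r s A * antidiag s = antidiag s * first_row_block_sum r s A"
    and w: "w \<in> carrier_vec s" and ws: "\<forall>a<s. w $ (s-1-a) = w $ a"
  shows "A *\<^sub>v vec (r*s) (\<lambda>l. w $ (l mod s)) = vec (r*s) (\<lambda>l. (first_row_block_sum r s A *\<^sub>v w) $ (l mod s))"
proof (rule eq_vecI)
  let ?B = "first_row_block_sum r s A"
  show "dim_vec (A *\<^sub>v vec (r*s) (\<lambda>l. w $ (l mod s))) = dim_vec (vec (r*s) (\<lambda>l. (?B *\<^sub>v w) $ (l mod s)))"
    using Ac by simp
  fix l assume "l < dim_vec (vec (r*s) (\<lambda>l. (?B *\<^sub>v w) $ (l mod s)))"
  hence l: "l < r*s" by simp
  define i where "i = l div s"
  define a where "a = l mod s"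
  have s0: "s > 0" using l by (cases s) auto
  have i: "i < r" using l unfolding i_def by (simp add: less_mult_imp_div_less)
  have a: "a < s" using s0 unfolding a_def by simp
  have lia: "l = i*s+a" unfolding i_def a_def by simp
  obtain f where f: "\<forall>a<s. \<forall>j<r. \<forall>b<s. A $$ (i*s+a, j*s+b) = A $$ (if f then s-1-a else a, ((j+r-i) mod r)*s+b)"
    using rs[OF i] by blast
  define c where "c = (if f then s-1-a else a)"
  have c: "c < s" using a unfolding c_def by auto
  have Bwc: "(?B *\<^sub>v w) $ c = (?B *\<^sub>v w) $ a"
    unfolding c_def using B_sym[OF B_carrier comm w ws a] by simp
  have "(A *\<^sub>v vec (r*s) (\<lambda>l. w $ (l mod s))) $ l = (\<Sum>l'<r*s. A $$ (l, l') * w $ (l' mod s))"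
    using Ac l by (simp add: scalar_prod_def lessThan_atLeast0)
  also have "\<dots> = (\<Sum>j<r. \<Sum>b<s. A $$ (l, j*s+b) * w $ ((j*s+b) mod s))"
    by (rule sum_split)
  also have "\<dots> = (\<Sum>j<r. \<Sum>b<s. A $$ (c, ((j+r-i) mod r)*s+b) * w $ b)"
    using f a unfolding lia c_def by (intro sum.cong refl) auto
  also have "\<dots> = (\<Sum>b<s. \<Sum>j<r. A $$ (c, ((j+r-i) mod r)*s+b) * w $ b)"
    by (rule sum.swap)
  also have "\<dots> = (\<Sum>b<s. \<Sum>j<r. A $$ (c, j*s+b) * w $ b)"
  proof (rule sum.cong[OF refl])
    fix b show "(\<Sum>j<r. A $$ (c, ((j+r-i) mod r)*s+b) * w $ b) = (\<Sum>j<r. A $$ (c, j*s+b) * w $ b)"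
      using circ_reindex[OF i, of "\<lambda>j. A $$ (c, j*s+b) * w $ b"] by simp
  qed
  also have "\<dots> = (\<Sum>b<s. ?B $$ (c,b) * w $ b)"
    using c by (intro sum.cong refl) (simp add: B_idx sum_distrib_right)
  also have "\<dots> = (?B *\<^sub>v w) $ c"
    using c w by (simp add: scalar_prod_def lessThan_atLeast0 B_dims)
  finally show "(A *\<^sub>v vec (r*s) (\<lambda>l. w $ (l mod s))) $ l = vec (r*s) (\<lambda>l. (?B *\<^sub>v w) $ (l mod s)) $ l"
    using Bwc l unfolding a_def by simp
qed


lemma stack_pow:
  assumes Ac: "A \<in> carrier_mat (r*s) (r*s)"
    and rs: "\<And>i. i < r \<Longrightarrow> \<exists>f. \<forall>a<s. \<forall>j<r. \<forall>b<s. A $$ (i*s+a, j*s+b) = A $$ (if f then s-1-a else a, ((j+r-i) mod r)*s+b)"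
    and comm: "first_row_block_sum r s A * antidiag s = antidiag s * first_row_block_sum r s A"
  shows "w \<in> carrier_vec s \<Longrightarrow> \<forall>a<s. w $ (s-1-a) = w $ a \<Longrightarrow>
    (A ^\<^sub>m k) *\<^sub>v vec (r*s) (\<lambda>l. w $ (l mod s)) = vec (r*s) (\<lambda>l. ((first_row_block_sum r s A ^\<^sub>m k) *\<^sub>v w) $ (l mod s))"
proof (induct k arbitrary: w)
  case 0
  have d: "dim_row A = r*s" using Ac by simp
  have e1: "(A ^\<^sub>m 0) *\<^sub>v vec (r*s) (\<lambda>l. w $ (l mod s)) = vec (r*s) (\<lambda>l. w $ (l mod s))"
    unfolding pow_mat.simps d by (rule one_mult_mat_vec) simp
  have e2: "(first_row_block_sum r s A ^\<^sub>m 0) *\<^sub>v w = w"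
    unfolding pow_mat.simps B_dims by (rule one_mult_mat_vec) (use 0 in simp)
  show ?case unfolding e1 e2 by (rule refl)
next
  case (Suc k)
  let ?B = "first_row_block_sum r s A"
  have Bw: "?B *\<^sub>v w \<in> carrier_vec s" by (rule mult_mat_vec_carrier[OF B_carrier Suc.prems(1)])
  have Bws: "\<forall>a<s. (?B *\<^sub>v w) $ (s-1-a) = (?B *\<^sub>v w) $ a"
    using B_sym[OF B_carrier comm Suc.prems] by blast
  have "(A ^\<^sub>m Suc k) *\<^sub>v vec (r*s) (\<lambda>l. w $ (l mod s)) = (A ^\<^sub>m k) *\<^sub>v (A *\<^sub>v vec (r*s) (\<lambda>l. w $ (l mod s)))"
    using Ac by (simp add: assoc_mult_mat_vec[of _ "r*s" "r*s" _ "r*s"])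
  also have "\<dots> = (A ^\<^sub>m k) *\<^sub>v vec (r*s) (\<lambda>l. (?B *\<^sub>v w) $ (l mod s))"
    using stack_mult[OF Ac rs comm Suc.prems] by simp
  also have "\<dots> = vec (r*s) (\<lambda>l. ((?B ^\<^sub>m k) *\<^sub>v (?B *\<^sub>v w)) $ (l mod s))"
    using Suc.hyps[OF Bw Bws] .
  also have "(?B ^\<^sub>m k) *\<^sub>v (?B *\<^sub>v w) = (?B ^\<^sub>m Suc k) *\<^sub>v w"
    unfolding pow_mat.simps
    by (rule assoc_mult_mat_vec[symmetric, OF pow_carrier_mat[OF B_carrier] B_carrier Suc.prems(1)])
  finally show ?case .
qed

lemma nb_map: "norm_bound (map_mat complex_of_real P) d \<longleftrightarrow> norm_bound P d"
  unfolding norm_bound_def by simp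


theorem lemma4p3:
  fixes r s :: nat and A :: "real mat"
  assumes "r \<ge> 1" and "s \<ge> 1"
    and "A \<in> carrier_mat (r*s) (r*s)"
    and "\<forall>i<r*s. \<forall>j<r*s. A $$ (i,j) \<ge> 0"
    and "disoriented_block_circulant r s A"
    and "first_row_block_sum r s A * antidiag s = antidiag s * first_row_block_sum r s A"
  shows "rho A = rho (first_row_block_sum r s A)"
proof -
  note Ac = assms(3) and nnA = assms(4) and dis = assms(5) and comm = assms(6)
  define B where "B = first_row_block_sum r s A"
  have sle: "s \<le> r * s" using assms(1) by simp
  have Bc: "B \<in> carrier_mat s s" unfolding B_def by (rule B_carrier)
  have nnB: "\<forall>a<s. \<forall>b<s. B $$ (a,b) \<ge> 0"
  proof (intro allI impI)
    fix a b assume ab: "a < s" "b < s"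
    have "B $$ (a,b) = (\<Sum>j<r. A $$ (a, j*s+b))" unfolding B_def using ab by (rule B_idx)
    also have "\<dots> \<ge> 0"
    proof (rule sum_nonneg)
      fix j assume "j \<in> {..<r}"
      hence "Suc j \<le> r" by simp
      hence "Suc j * s \<le> r * s" by (rule mult_le_mono1)
      moreover have "j*s+b < Suc j * s" using ab by simp
      ultimately have "j*s+b < r*s" by linarith
      moreover have "a < r*s" using ab assms(1) sle by linarith
      ultimately show "A $$ (a, j*s+b) \<ge> 0" using nnA by blast
    qed
    finally show "B $$ (a,b) \<ge> 0" .
  qed
  have rs: "\<And>i. i < r \<Longrightarrow> \<exists>f. \<forall>a<s. \<forall>j<r. \<forall>b<s. A $$ (i*s+a, j*s+b) = A $$ (if f then s-1-a else a, ((j+r-i) mod r)*s+b)"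
    by (rule row_struct[OF dis])
  define one where "one = vec s (\<lambda>_. (1::real))"
  have onec: "one \<in> carrier_vec s" unfolding one_def by simp
  have ones: "\<forall>a<s. one $ (s-1-a) = one $ a" unfolding one_def by simp
  have s0: "s > 0" using assms(2) by simp
  have stone: "vec (r*s) (\<lambda>l. one $ (l mod s)) = vec (r*s) (\<lambda>_. 1)"
    unfolding one_def using s0 by (intro eq_vecI) auto
  have key: "(A ^\<^sub>m k) *\<^sub>v vec (r*s) (\<lambda>_. 1) = vec (r*s) (\<lambda>l. ((B ^\<^sub>m k) *\<^sub>v one) $ (l mod s))" for k
    using stack_pow[OF Ac rs comm onec ones, of k] unfolding stone B_def .
  define Ax where "Ax = map_mat complex_of_real A"
  define Bx where "Bx = map_mat complex_of_real B"
  have Axc: "Ax \<in> carrier_mat (r*s) (r*s)" unfolding Ax_def using Ac by simp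
  have Bxc: "Bx \<in> carrier_mat s s" unfolding Bx_def using Bc by simp
  have Apow: "Ax ^\<^sub>m k = map_mat complex_of_real (A ^\<^sub>m k)" for k
    unfolding Ax_def by (rule of_real_hom.mat_hom_pow[OF Ac, symmetric])
  have Bpow: "Bx ^\<^sub>m k = map_mat complex_of_real (B ^\<^sub>m k)" for k
    unfolding Bx_def by (rule of_real_hom.mat_hom_pow[OF Bc, symmetric])
  have rsn: "r * s > 0" using assms(1,2) by simp
  have le1: "spectral_radius Ax \<le> spectral_radius Bx"
  proof (rule sr_le[OF Axc Bxc rsn s0, of "real s"])
    fix k d assume "norm_bound (Bx ^\<^sub>m k) d"
    hence nb: "norm_bound (B ^\<^sub>m k) d" unfolding Bpow nb_map .
    show "norm_bound (Ax ^\<^sub>m k) (real s * d)" unfolding Apow nb_map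
    proof
      fix i j assume "i < dim_row (A ^\<^sub>m k)" "j < dim_col (A ^\<^sub>m k)"
      hence ij: "i < r*s" "j < r*s" using Ac by (auto split: if_splits)
      have pc: "A ^\<^sub>m k \<in> carrier_mat (r*s) (r*s)" using Ac by simp
      have nn: "\<forall>i<r*s. \<forall>j<r*s. (A ^\<^sub>m k) $$ (i,j) \<ge> 0"
        using nonneg_pow[OF Ac nnA] by blast
      have "norm ((A ^\<^sub>m k) $$ (i,j)) = (A ^\<^sub>m k) $$ (i,j)" using nn ij by simp
      also have "\<dots> \<le> ((A ^\<^sub>m k) *\<^sub>v vec (r*s) (\<lambda>_. 1)) $ i"
        by (rule entry_le_rowsum[OF pc nn ij])
      also have "\<dots> = ((B ^\<^sub>m k) *\<^sub>v one) $ (i mod s)" unfolding key using ij by simp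
      also have "\<dots> \<le> real s * d" unfolding one_def
        by (rule rowsum_le[OF pow_carrier_mat[OF Bc] nb]) (use s0 in simp)
      finally show "norm ((A ^\<^sub>m k) $$ (i,j)) \<le> real s * d" .
    qed
  qed simp
  have le2: "spectral_radius Bx \<le> spectral_radius Ax"
  proof (rule sr_le[OF Bxc Axc s0 rsn, of "real (r*s)"])
    fix k d assume "norm_bound (Ax ^\<^sub>m k) d"
    hence nb: "norm_bound (A ^\<^sub>m k) d" unfolding Apow nb_map .
    show "norm_bound (Bx ^\<^sub>m k) (real (r*s) * d)" unfolding Bpow nb_map
    proof
      fix a b assume "a < dim_row (B ^\<^sub>m k)" "b < dim_col (B ^\<^sub>m k)"
      hence ab: "a < s" "b < s" using Bc by (auto split: if_splits)
      have ars: "a < r*s" using ab sle by linarith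
      have pc: "B ^\<^sub>m k \<in> carrier_mat s s" using Bc by simp
      have nn: "\<forall>i<s. \<forall>j<s. (B ^\<^sub>m k) $$ (i,j) \<ge> 0"
        using nonneg_pow[OF Bc nnB] by blast
      have "norm ((B ^\<^sub>m k) $$ (a,b)) = (B ^\<^sub>m k) $$ (a,b)" using nn ab by simp
      also have "\<dots> \<le> ((B ^\<^sub>m k) *\<^sub>v one) $ a"
        unfolding one_def by (rule entry_le_rowsum[OF pc nn ab])
      also have "\<dots> = ((A ^\<^sub>m k) *\<^sub>v vec (r*s) (\<lambda>_. 1)) $ a" unfolding key using ab ars by simp
      also have "\<dots> \<le> real (r*s) * d"
        by (rule rowsum_le[OF pow_carrier_mat[OF Ac] nb ars])
      finally show "norm ((B ^\<^sub>m k) $$ (a,b)) \<le> real (r*s) * d" .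
    qed
  qed simp
  show ?thesis unfolding rho_def B_def[symmetric] Ax_def[symmetric] Bx_def[symmetric]
    using le1 le2 by simp
qed

end
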